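(* Let $(X,\mathcal{A},\mu)$ be a $q$-measure space, let $A,B,C\in\mathcal{A}$ be mutually disjoint, and let $f\colon X\to\mathbb{R}$ be measurable such that $f\chi_A,f\chi_B,f\chi_C,f\chi_{A\cup B},f\chi_{A\cup C},f\chi_{B\cup C}$ are $\mu$-integrable. Then \[ \int_{A\cup B\cup C}f\,d\mu=\int_{A\cup B}f\,d\mu+\int_{A\cup C}f\,d\mu+\int_{B\cup C}f\,d\mu-\int_A f\,d\mu-\int_B f\,d\mu-\int_C f\,d\mu . \]
   Context: A $q$-measure space is a triple $(X,\mathcal{A},\mu)$ where $\mathcal{A}$ is a $\sigma$-algebra of subsets of $X$ and $\mu\colon\mathcal{A}\to[0,\infty)$ satisfies: (i) grade-2 additivity: $\mu(A\cup B\cup C)=\mu(A\cup B)+\mu(A\cup C)+\mu(B\cup C)-\mu(A)-\mu(B)-\mu(C)$ for mutually disjoint $A,B,C\in\mathcal{A}$; (ii) if $A_i\in\mathcal{A}$ is increasing then $\mu(\bigcup A_i)=\lim\mu(A_i)$; (iii) if $A_i\in\mathcal{A}$ is decreasing then $\mu(\bigcap A_i)=\lim\mu(A_i)$. For measurable $f$, $f$ is $\mu$-integrable if $\lambda\mapsto\mu(f^{-1}(\lambda,\infty))$ and $\lambda\mapsto\mu(f^{-1}(-\infty,-\lambda))$ have finite Lebesgue integral over $[0,\infty)$, and then $\int f\,d\mu=\int_0^\infty\mu(f^{-1}(\lambda,\infty))\,d\lambda-\int_0^\infty\mu(f^{-1}(-\infty,-\lambda))\,d\lambda$. For $A\in\mathcal{A}$,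 $\int_A f\,d\mu:=\int f\chi_A\,d\mu$, with $\chi_A$ the characteristic function of $A$. *)

theory Defs
  imports "HOL-Analysis.Analysis"
begin

definition qmeasure_space :: "'a measure \<Rightarrow> ('a set \<Rightarrow> real) \<Rightarrow> bool" where
  "qmeasure_space M \<mu> \<longleftrightarrow>
     (\<forall>A\<in>sets M. 0 \<le> \<mu> A) \<and>
     (\<forall>A\<in>sets M. \<forall>B\<in>sets M. \<forall>C\<in>sets M.
        A \<inter> B = {} \<and> A \<inter> C = {} \<and> B \<inter> C = {} \<longrightarrow>
        \<mu> (A \<union> B \<union> C) = \<mu> (A \<union> B) + \<mu> (A \<union> C) + \<mu> (B \<union> C) - \<mu> A - \<mu> B - \<mu> C) \<and>
     (\<forall>A::nat \<Rightarrow> 'a set. range A \<subseteq> sets M \<and> incseq A \<longrightarrow>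
        (\<lambda>i. \<mu> (A i)) \<longlonglongrightarrow> \<mu> (\<Union>i. A i)) \<and>
     (\<forall>A::nat \<Rightarrow> 'a set. range A \<subseteq> sets M \<and> decseq A \<longrightarrow>
        (\<lambda>i. \<mu> (A i)) \<longlonglongrightarrow> \<mu> (\<Inter>i. A i))"

definition q_integrable :: "'a measure \<Rightarrow> ('a set \<Rightarrow> real) \<Rightarrow> ('a \<Rightarrow> real) \<Rightarrow> bool" where
  "q_integrable M \<mu> f \<longleftrightarrow>
     f \<in> borel_measurable M \<and>
     set_integrable lborel {0..} (\<lambda>t. \<mu> {x \<in> space M. f x > t}) \<and>
     set_integrable lborel {0..} (\<lambda>t. \<mu> {x \<in> space M. f x < - t})"

definition q_integral :: "'a measure \<Rightarrow> ('a set \<Rightarrow> real) \<Rightarrow> ('a \<Rightarrow> real) \<Rightarrow> real" where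
  "q_integral M \<mu> f =
     (LINT t:{0..}|lborel. \<mu> {x \<in> space M. f x > t}) -
     (LINT t:{0..}|lborel. \<mu> {x \<in> space M. f x < - t})"

definition q_set_integral :: "'a measure \<Rightarrow> ('a set \<Rightarrow> real) \<Rightarrow> 'a set \<Rightarrow> ('a \<Rightarrow> real) \<Rightarrow> real" where
  "q_set_integral M \<mu> A f = q_integral M \<mu> (\<lambda>x. f x * indicator A x)"

end

theory Submission
  imports Defs
begin

lemma lin6:
  fixes g gab gac gbc ga gb gc :: "real \<Rightarrow> real"
  assumes "set_integrable lborel {0..} gab" "set_integrable lborel {0..} gac"
    "set_integrable lborel {0..} gbc" "set_integrable lborel {0..} ga"
    "set_integrable lborel {0..} gb" "set_integrable lborel {0..} gc"
    and eq: "\<And>t. t \<ge> 0 \<Longrightarrow> g t = gab t + gac t + gbc t - ga t - gb t - gc t"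
  shows "(LINT t:{0..}|lborel. g t) = (LINT t:{0..}|lborel. gab t) + (LINT t:{0..}|lborel. gac t)
     + (LINT t:{0..}|lborel. gbc t) - (LINT t:{0..}|lborel. ga t) - (LINT t:{0..}|lborel. gb t)
     - (LINT t:{0..}|lborel. gc t)"
proof -
  have "(LINT t:{0..}|lborel. g t) = (LINT t:{0..}|lborel. gab t + gac t + gbc t - ga t - gb t - gc t)"
    by (rule set_lebesgue_integral_cong) (auto simp: eq)
  also have "\<dots> = (LINT t:{0..}|lborel. gab t) + (LINT t:{0..}|lborel. gac t)
     + (LINT t:{0..}|lborel. gbc t) - (LINT t:{0..}|lborel. ga t) - (LINT t:{0..}|lborel. gb t)
     - (LINT t:{0..}|lborel. gc t)"
    using assms(1-6) by (simp add: set_integral_add set_integral_diff)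
  finally show ?thesis .
qed

lemma qadd:
  assumes q: "qmeasure_space M \<mu>" and P: "P \<in> sets M"
    and "A \<in> sets M" "B \<in> sets M" "C \<in> sets M"
    and "A \<inter> B = {}" "A \<inter> C = {}" "B \<inter> C = {}"
  shows "\<mu> (P \<inter> (A \<union> B \<union> C)) = \<mu> (P \<inter> (A \<union> B)) + \<mu> (P \<inter> (A \<union> C)) + \<mu> (P \<inter> (B \<union> C))
     - \<mu> (P \<inter> A) - \<mu> (P \<inter> B) - \<mu> (P \<inter> C)"
proof -
  have "\<mu> (P \<inter> A \<union> P \<inter> B \<union> P \<inter> C) = \<mu> (P \<inter> A \<union> P \<inter> B) + \<mu> (P \<inter> A \<union> P \<inter> C) + \<mu> (P \<inter> B \<union> P \<inter> C)
     - \<mu> (P \<inter> A) - \<mu> (P \<inter> B) - \<mu> (P \<inter> C)"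
    using q assms(2-8) unfolding qmeasure_space_def by (simp add: Int_ac(3) disjoint_iff) blast?
  then show ?thesis by (simp add: Int_Un_distrib)
qed

lemma lev_gt:
  assumes "S \<in> sets M" "(t::real) \<ge> 0"
  shows "{x \<in> space M. f x * indicator S x > t} = {x \<in> space M. f x > t} \<inter> S"
  using assms sets.sets_into_space[OF assms(1)] by (auto simp: indicator_def)

lemma lev_lt:
  assumes "S \<in> sets M" "(t::real) \<ge> 0"
  shows "{x \<in> space M. f x * indicator S x < - t} = {x \<in> space M. f x < - t} \<inter> S"
  using assms sets.sets_into_space[OF assms(1)] by (auto simp: indicator_def)

theorem corollary4p5:
  fixes M :: "'a measure" and \<mu> :: "'a set \<Rightarrow> real" and f :: "'a \<Rightarrow> real"
  assumes "qmeasure_space M \<mu>"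
    and "A \<in> sets M" "B \<in> sets M" "C \<in> sets M"
    and "A \<inter> B = {}" "A \<inter> C = {}" "B \<inter> C = {}"
    and "f \<in> borel_measurable M"
    and "q_integrable M \<mu> (\<lambda>x. f x * indicator A x)"
    and "q_integrable M \<mu> (\<lambda>x. f x * indicator B x)"
    and "q_integrable M \<mu> (\<lambda>x. f x * indicator C x)"
    and "q_integrable M \<mu> (\<lambda>x. f x * indicator (A \<union> B) x)"
    and "q_integrable M \<mu> (\<lambda>x. f x * indicator (A \<union> C) x)"
    and "q_integrable M \<mu> (\<lambda>x. f x * indicator (B \<union> C) x)"
  shows "q_set_integral M \<mu> (A \<union> B \<union> C) f =
           q_set_integral M \<mu> (A \<union> B) f + q_set_integral M \<mu> (A \<union> C) f
         + q_set_integral M \<mu> (B \<union> C) f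
         - q_set_integral M \<mu> A f - q_set_integral M \<mu> B f - q_set_integral M \<mu> C f"
proof -
  have sets: "A \<union> B \<in> sets M" "A \<union> C \<in> sets M" "B \<union> C \<in> sets M" "A \<union> B \<union> C \<in> sets M"
    using assms(2-4) by auto
  have Pm: "{x \<in> space M. f x > t} \<in> sets M" for t
    using assms(8) by measurable
  have Qm: "{x \<in> space M. f x < - t} \<in> sets M" for t
    using assms(8) by measurable
  have I1: "(LINT t:{0..}|lborel. \<mu> {x \<in> space M. f x * indicator (A \<union> B \<union> C) x > t}) =
     (LINT t:{0..}|lborel. \<mu> {x \<in> space M. f x * indicator (A \<union> B) x > t})
   + (LINT t:{0..}|lborel. \<mu> {x \<in> space M. f x * indicator (A \<union> C) x > t})
   + (LINT t:{0..}|lborel. \<mu> {x \<in> space M. f x * indicator (B \<union> C) x > t})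
   - (LINT t:{0..}|lborel. \<mu> {x \<in> space M. f x * indicator A x > t})
   - (LINT t:{0..}|lborel. \<mu> {x \<in> space M. f x * indicator B x > t})
   - (LINT t:{0..}|lborel. \<mu> {x \<in> space M. f x * indicator C x > t})"
    apply (rule lin6)
    using assms(9-14) apply (simp_all add: q_integrable_def)
    apply (simp add: lev_gt[OF sets(4)] lev_gt[OF sets(1)] lev_gt[OF sets(2)] lev_gt[OF sets(3)]
        lev_gt[OF assms(2)] lev_gt[OF assms(3)] lev_gt[OF assms(4)])
    by (rule qadd[OF assms(1) Pm assms(2-7)])
  have I2: "(LINT t:{0..}|lborel. \<mu> {x \<in> space M. f x * indicator (A \<union> B \<union> C) x < - t}) =
     (LINT t:{0..}|lborel. \<mu> {x \<in> space M. f x * indicator (A \<union> B) x < - t})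
   + (LINT t:{0..}|lborel. \<mu> {x \<in> space M. f x * indicator (A \<union> C) x < - t})
   + (LINT t:{0..}|lborel. \<mu> {x \<in> space M. f x * indicator (B \<union> C) x < - t})
   - (LINT t:{0..}|lborel. \<mu> {x \<in> space M. f x * indicator A x < - t})
   - (LINT t:{0..}|lborel. \<mu> {x \<in> space M. f x * indicator B x < - t})
   - (LINT t:{0..}|lborel. \<mu> {x \<in> space M. f x * indicator C x < - t})"
    apply (rule lin6)
    using assms(9-14) apply (simp_all add: q_integrable_def)
    apply (simp add: lev_lt[OF sets(4)] lev_lt[OF sets(1)] lev_lt[OF sets(2)] lev_lt[OF sets(3)]
        lev_lt[OF assms(2)] lev_lt[OF assms(3)] lev_lt[OF assms(4)])
    by (rule qadd[OF assms(1) Qm assms(2-7)])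
  show ?thesis
    unfolding q_set_integral_def q_integral_def using I1 I2 by linarith
qed

end
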